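(* Let $\mathcal{L}:\mathbb{R}^n\to\mathbb{R}$ be differentiable, let $(\eta^{(t)})_{t\ge 0}$ be positive learning rates and $(d^{(t)})_{t\ge0}$ nonnegative scalar thresholds. Let $\theta^{(t)}\in\mathbb{R}^n$ be hidden weights and $w^{(t)}=\mathcal{S}_{d^{(t)}}(\theta^{(t)})$ the actual weights, updated by $$\theta^{(t+1)}=\theta^{(t)}-\eta^{(t)}\,\nabla_w\mathcal{L}(w^{(t)})\odot\nabla_\theta w(\theta^{(t)},d^{(t)}),\qquad w^{(t+1)}=\mathcal{S}_{d^{(t+1)}}(\theta^{(t+1)}),$$ where the $i$-th component of $\nabla_\theta w(\theta^{(t)},d^{(t)})$ is the derivative of $\theta\mapsto \mathcal{S}_{d^{(t)}}(\theta)$ at $\theta_i^{(t)}$ whenever $|\theta_i^{(t)}|\neq d^{(t)}$ (so it equals $1$ when $|\theta_i^{(t)}|>d^{(t)}$). Let $i$ be an index with $w_i^{(t)}\neq 0$ such that $|\theta_i^{(t+1)}|>d^{(t)}$ and $\operatorname{sign}(\theta_i^{(t+1)})=\operatorname{sign}(\theta_i^{(t)})$. Then $$w_i^{(t+1)}=\mathcal{S}_{d^{(t+1)}-d^{(t)}}\Big(w_i^{(t)}-\eta^{(t)}\,\frac{\partial\mathcal{L}}{\partial w_i}(w^{(t)})\Big).$$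
   Context: $\odot$ is the element-wise product. The soft threshold mapping with scalar threshold $d$ is the element-wise map $\mathcal{S}_d(x)_i=\operatorname{sign}(x_i)\max\{|x_i|-d,0\}$ (applied to scalars likewise). *)

theory Defs
  imports "HOL-Analysis.Analysis"
begin

definition soft_thr :: "real \<Rightarrow> real \<Rightarrow> real" where
  "soft_thr d x = sgn x * max (\<bar>x\<bar> - d) 0"

definition soft_thr_vec :: "real \<Rightarrow> real ^ 'n \<Rightarrow> real ^ 'n" where
  "soft_thr_vec d x = (\<chi> i. soft_thr d (x $ i))"

definition grad :: "(real ^ 'n \<Rightarrow> real) \<Rightarrow> real ^ 'n \<Rightarrow> real ^ 'n" where
  "grad L w = (\<chi> i. frechet_derivative L (at w) (axis i 1))"

end

theory Submission
  imports Defs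
begin

lemma soft_deriv:
  assumes "d \<ge> 0" "\<bar>x\<bar> > d"
  shows "deriv (soft_thr d) x = 1"
proof (cases "x > d")
  case True
  have "((\<lambda>y. y - d) has_field_derivative 1) (at x)"
    by (auto intro!: derivative_eq_intros)
  then have "(soft_thr d has_field_derivative 1) (at x)"
    apply (rule has_field_derivative_transform_within_open[where S="{d<..}"])
    using True assms by (auto simp: soft_thr_def)
  then show ?thesis by (rule DERIV_imp_deriv)
next
  case False
  then have xl: "x < -d" using assms by auto
  have "((\<lambda>y. y + d) has_field_derivative 1) (at x)"
    by (auto intro!: derivative_eq_intros)
  then have "(soft_thr d has_field_derivative 1) (at x)"
    apply (rule has_field_derivative_transform_within_open[where S="{..<-d}"])
    using xl assms by (auto simp: soft_thr_def)
  then show ?thesis by (rule DERIV_imp_deriv)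
qed

theorem lemma1:
  fixes L :: "real ^ 'n \<Rightarrow> real"
    and eta d :: "nat \<Rightarrow> real"
    and theta w gw :: "nat \<Rightarrow> real ^ 'n"
    and t :: nat and i :: 'n
  assumes diff: "\<And>x. L differentiable (at x)"
    and eta_pos: "\<And>s. eta s > 0"
    and d_nonneg: "\<And>s. d s \<ge> 0"
    and w_def: "\<And>s. w s = soft_thr_vec (d s) (theta s)"
    and gw_def: "\<And>s j. \<bar>theta s $ j\<bar> \<noteq> d s \<Longrightarrow>
                   gw s $ j = deriv (soft_thr (d s)) (theta s $ j)"
    and update: "\<And>s. theta (Suc s) =
                   theta s - (\<chi> j. eta s * (grad L (w s) $ j) * (gw s $ j))"
    and w_nz: "w t $ i \<noteq> 0"
    and big: "\<bar>theta (Suc t) $ i\<bar> > d t"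
    and same_sign: "sgn (theta (Suc t) $ i) = sgn (theta t $ i)"
  shows "w (Suc t) $ i =
           soft_thr (d (Suc t) - d t) (w t $ i - eta t * (grad L (w t) $ i))"
proof -
  define a where "a = theta t $ i"
  define b where "b = theta (Suc t) $ i"
  define g where "g = grad L (w t) $ i"
  have wt: "w t $ i = soft_thr (d t) a" using w_def by (simp add: soft_thr_vec_def a_def)
  have wt1: "w (Suc t) $ i = soft_thr (d (Suc t)) b" using w_def by (simp add: soft_thr_vec_def b_def)
  have ab: "\<bar>a\<bar> > d t" using w_nz wt by (auto simp: soft_thr_def)
  have "gw t $ i = 1" using gw_def[of t i] soft_deriv[OF d_nonneg ab] ab a_def by auto
  then have bdef: "b = a - eta t * g" using update[of t] by (simp add: b_def a_def g_def)
  have bb: "\<bar>b\<bar> > d t" using big b_def by simp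
  have ss: "sgn b = sgn a" using same_sign a_def b_def by simp
  have d0: "d t \<ge> 0" "d (Suc t) \<ge> 0" using d_nonneg by auto
  show ?thesis
    unfolding wt wt1 g_def[symmetric]
  proof (cases "a > 0")
    case True
    then have "b > 0" using ss by (simp add: sgn_if split: if_splits)
    then show "soft_thr (d (Suc t)) b = soft_thr (d (Suc t) - d t) (soft_thr (d t) a - eta t * g)"
      using True ab bb bdef d0 by (auto simp: soft_thr_def sgn_if max_def)
  next
    case False
    then have "a < 0" using ab d0 by auto
    then have "b < 0" using ss by (simp add: sgn_if split: if_splits)
    then show "soft_thr (d (Suc t)) b = soft_thr (d (Suc t) - d t) (soft_thr (d t) a - eta t * g)"
      using \<open>a < 0\<close> ab bb bdef d0 by (auto simp: soft_thr_def sgn_if max_def)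
  qed
qed

end
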